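(* Let $L,L'$ be finite simplicial complexes and $\varphi: L\to L'$ a bijective simplicial finite-fibration. Then $$\mathrm{scat}(\varphi)\le\mathrm{scat}(L)\le\mathrm{TC}(\varphi)\le\mathrm{TC}(L)\le\mathrm{scat}(L\times L).$$
   Context: Simplicial complexes are abstract and edge-path connected; $K\times K'$ is the categorical product (vertex set $\mathrm{VX}(K)\times\mathrm{VX}(K')$; a set of vertices is a simplex iff both projections are simplices). Simplicial maps $f,g: K\to K'$ are contiguous if $f(\sigma)\cup g(\sigma)$ is a simplex for every simplex $\sigma$; $f\sim g$ if joined by a finite chain of contiguous simplicial maps. $\mathrm{SD}(\varphi_1,\varphi_2)$ for simplicial maps $K\to K'$ is the least $k\ge0$ such that $K$ is a union of subcomplexes $K_0,\dots,K_k$ with $\varphi_1|_{K_j}\sim\varphi_2|_{K_j}$ for all $j$. With $p_1,p_2: L\times L\to L$ the projections, $\mathrm{TC}(L)=\mathrm{SD}(p_1,p_2)$. For a complex $K$, a vertex $v_0$ of $K$ and constant map $c_{v_0}: K\to K$: $\mathrm{scat}(K)=\mathrm{SD}(1_K,c_{v_0})$; for $\varphi: L\to L'$, $\mathrm{scat}(\varphi)=\mathrm{SD}(\varphi,\varphi\circ c_{v_0})$. $I_m$ is the complex with vertices $0,\dots,m$ and edges $\{i,i+1\}$; $\varphi$ is a simplicial finite-fibration if for every finite complex $N$, $m\ge1$, inclusion $i: N\times\{0\}\to N\times I_m$ and simplicial $g: N\times\{0\}\to L$, $G: N\times I_m\to L'$ with $\varphi\circ g=G\circ i$, there is simplicial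 $\widetilde G$ with $\widetilde G\circ i=g$, $\varphi\circ\widetilde G=G$. $\mathrm{TC}(\varphi)$ is the simplicial Schwarz genus of $\pi_\varphi: L^I\to L\times L'$, $\delta\mapsto(\delta(0),\varphi(\delta(1)))$, where $L^I$ is the simplicial path complex of $L$; the simplicial Schwarz genus of $p: E\to B$ is the least $k\ge0$ such that $B$ is a union of subcomplexes $B_0,\dots,B_k$ each admitting a simplicial $s: B_j\to E$ with $p\circ s$ the inclusion. *)

theory Defs
  imports Main "HOL-Library.Extended_Nat"
begin

definition simplicial_complex :: "'a set set \<Rightarrow> bool" where
  "simplicial_complex K \<longleftrightarrow>
     (\<forall>\<sigma>\<in>K. \<sigma> \<noteq> {} \<and> finite \<sigma> \<and> (\<forall>\<tau>. \<tau> \<subseteq> \<sigma> \<and> \<tau> \<noteq> {} \<longrightarrow> \<tau> \<in> K))"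

definition vertices :: "'a set set \<Rightarrow> 'a set" where
  "vertices K = \<Union>K"

definition edge_connected :: "'a set set \<Rightarrow> bool" where
  "edge_connected K \<longleftrightarrow>
     (\<forall>v\<in>vertices K. \<forall>w\<in>vertices K. (\<lambda>x y. {x, y} \<in> K)\<^sup>*\<^sup>* v w)"

text \<open>Standing convention: complexes are edge-path connected.\<close>
definition complex :: "'a set set \<Rightarrow> bool" where
  "complex K \<longleftrightarrow> simplicial_complex K \<and> edge_connected K"

definition finite_complex :: "'a set set \<Rightarrow> bool" where
  "finite_complex K \<longleftrightarrow> complex K \<and> finite (vertices K)"

definition subcomplex :: "'a set set \<Rightarrow> 'a set set \<Rightarrow> bool" where
  "subcomplex K0 K \<longleftrightarrow> K0 \<subseteq> K \<and> simplicial_complex K0"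

definition simplicial_map :: "'a set set \<Rightarrow> 'b set set \<Rightarrow> ('a \<Rightarrow> 'b) \<Rightarrow> bool" where
  "simplicial_map K K' f \<longleftrightarrow> (\<forall>\<sigma>\<in>K. f ` \<sigma> \<in> K')"

definition contiguous :: "'a set set \<Rightarrow> 'b set set \<Rightarrow> ('a \<Rightarrow> 'b) \<Rightarrow> ('a \<Rightarrow> 'b) \<Rightarrow> bool" where
  "contiguous K K' f g \<longleftrightarrow>
     simplicial_map K K' f \<and> simplicial_map K K' g \<and> (\<forall>\<sigma>\<in>K. f ` \<sigma> \<union> g ` \<sigma> \<in> K')"

definition contig_equiv :: "'a set set \<Rightarrow> 'b set set \<Rightarrow> ('a \<Rightarrow> 'b) \<Rightarrow> ('a \<Rightarrow> 'b) \<Rightarrow> bool" where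
  "contig_equiv K K' f g \<longleftrightarrow>
     (\<exists>(h :: nat \<Rightarrow> 'a \<Rightarrow> 'b) n. h 0 = f \<and> h n = g \<and>
        (\<forall>i\<le>n. simplicial_map K K' (h i)) \<and>
        (\<forall>i<n. contiguous K K' (h i) (h (Suc i))))"

text \<open>Simplicial distance (value \<open>\<infinity>\<close> if no such cover exists).\<close>
definition SD :: "'a set set \<Rightarrow> 'b set set \<Rightarrow> ('a \<Rightarrow> 'b) \<Rightarrow> ('a \<Rightarrow> 'b) \<Rightarrow> enat" where
  "SD K K' f g = Inf {enat k | k. \<exists>Ks :: nat \<Rightarrow> 'a set set.
       (\<forall>j\<le>k. subcomplex (Ks j) K \<and> contig_equiv (Ks j) K' f g) \<and>
       K = (\<Union>j\<le>k. Ks j)}"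

definition prod_complex :: "'a set set \<Rightarrow> 'b set set \<Rightarrow> ('a \<times> 'b) set set" (infixr "\<times>\<^sub>S" 80) where
  "K \<times>\<^sub>S K' = {\<tau>. \<tau> \<noteq> {} \<and> finite \<tau> \<and> fst ` \<tau> \<in> K \<and> snd ` \<tau> \<in> K'}"

definition TC :: "'a set set \<Rightarrow> enat" where
  "TC L = SD (L \<times>\<^sub>S L) L fst snd"

definition base_vertex :: "'a set set \<Rightarrow> 'a" where
  "base_vertex K = (SOME v. v \<in> vertices K)"

definition scat :: "'a set set \<Rightarrow> enat" where
  "scat K = SD K K id (\<lambda>_. base_vertex K)"

definition scat_map :: "'a set set \<Rightarrow> 'b set set \<Rightarrow> ('a \<Rightarrow> 'b) \<Rightarrow> enat" where
  "scat_map L L' \<phi> = SD L L' \<phi> (\<phi> \<circ> (\<lambda>_. base_vertex L))"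

definition interval_complex :: "nat \<Rightarrow> nat set set" where
  "interval_complex m = {{i} | i. i \<le> m} \<union> {{i, Suc i} | i. i < m}"

text \<open>Simplicial finite-fibration. Test complexes \<open>N\<close> are taken with vertices in \<open>nat\<close>
  (every finite complex is isomorphic to one of these).\<close>
definition finite_fibration :: "'a set set \<Rightarrow> 'b set set \<Rightarrow> ('a \<Rightarrow> 'b) \<Rightarrow> bool" where
  "finite_fibration L L' \<phi> \<longleftrightarrow> simplicial_map L L' \<phi> \<and>
     (\<forall>(N :: nat set set) m g G.
        finite_complex N \<and> m \<ge> 1 \<and>
        simplicial_map (N \<times>\<^sub>S {{0}}) L g \<and>
        simplicial_map (N \<times>\<^sub>S interval_complex m) L' G \<and>
        (\<forall>x\<in>vertices (N \<times>\<^sub>S {{0}}). \<phi> (g x) = G x)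
        \<longrightarrow> (\<exists>Gt. simplicial_map (N \<times>\<^sub>S interval_complex m) L Gt \<and>
                  (\<forall>x\<in>vertices (N \<times>\<^sub>S {{0}}). Gt x = g x) \<and>
                  (\<forall>x\<in>vertices (N \<times>\<^sub>S interval_complex m). \<phi> (Gt x) = G x)))"

text \<open>Simplicial path complex: paths are simplicial maps from the half-line
  (vertices \<open>nat\<close>, edges \<open>{i, i+1}\<close>) that are eventually constant (i.e. paths
  \<open>I_m \<rightarrow> L\<close> extended by constants); a finite nonempty set of paths is a simplex iff
  for every edge \<open>{i,i+1}\<close> the union of its images is a simplex of \<open>L\<close>
  (the exponential object for the categorical product).\<close>
definition is_path :: "'a set set \<Rightarrow> (nat \<Rightarrow> 'a) \<Rightarrow> bool" where
  "is_path L \<delta> \<longleftrightarrow> (\<forall>i. {\<delta> i, \<delta> (Suc i)} \<in> L) \<and> (\<exists>m. \<forall>i\<ge>m. \<delta> i = \<delta> m)"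

definition path_complex :: "'a set set \<Rightarrow> (nat \<Rightarrow> 'a) set set" where
  "path_complex L = {F. F \<noteq> {} \<and> finite F \<and> (\<forall>\<delta>\<in>F. is_path L \<delta>) \<and>
       (\<forall>i. (\<Union>\<delta>\<in>F. {\<delta> i, \<delta> (Suc i)}) \<in> L)}"

definition path_end :: "(nat \<Rightarrow> 'a) \<Rightarrow> 'a" where
  "path_end \<delta> = \<delta> (LEAST m. \<forall>i\<ge>m. \<delta> i = \<delta> m)"

definition pi_map :: "('a \<Rightarrow> 'b) \<Rightarrow> (nat \<Rightarrow> 'a) \<Rightarrow> 'a \<times> 'b" where
  "pi_map \<phi> \<delta> = (\<delta> 0, \<phi> (path_end \<delta>))"

definition schwarz_genus :: "'e set set \<Rightarrow> 'b set set \<Rightarrow> ('e \<Rightarrow> 'b) \<Rightarrow> enat" where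
  "schwarz_genus E B p = Inf {enat k | k. \<exists>Bs :: nat \<Rightarrow> 'b set set.
       (\<forall>j\<le>k. subcomplex (Bs j) B \<and>
          (\<exists>s. simplicial_map (Bs j) E s \<and> (\<forall>b\<in>vertices (Bs j). p (s b) = b))) \<and>
       B = (\<Union>j\<le>k. Bs j)}"

definition TC_map :: "'a set set \<Rightarrow> 'b set set \<Rightarrow> ('a \<Rightarrow> 'b) \<Rightarrow> enat" where
  "TC_map L L' \<phi> = schwarz_genus (path_complex L) (L \<times>\<^sub>S L') (pi_map \<phi>)"

end

theory Submission
  imports Defs
begin

lemma vertices_iff: "v \<in> vertices K \<longleftrightarrow> (\<exists>\<sigma>\<in>K. v \<in> \<sigma>)"
  by (auto simp: vertices_def)

lemma sc_sub: "simplicial_complex K \<Longrightarrow> \<sigma> \<in> K \<Longrightarrow> \<tau> \<subseteq> \<sigma> \<Longrightarrow> \<tau> \<noteq> {} \<Longrightarrow> \<tau> \<in> K"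
  unfolding simplicial_complex_def by blast

lemma sc_ne: "simplicial_complex K \<Longrightarrow> \<sigma> \<in> K \<Longrightarrow> \<sigma> \<noteq> {}"
  unfolding simplicial_complex_def by blast

lemma sc_fin: "simplicial_complex K \<Longrightarrow> \<sigma> \<in> K \<Longrightarrow> finite \<sigma>"
  unfolding simplicial_complex_def by blast

lemma sc_singleton: "simplicial_complex K \<Longrightarrow> v \<in> vertices K \<Longrightarrow> {v} \<in> K"
  unfolding vertices_iff using sc_sub[of K _ "{v}"] by blast

lemma sub_vertices: "\<sigma> \<in> K \<Longrightarrow> \<sigma> \<subseteq> vertices K"
  by (auto simp: vertices_def)

lemma image_agree: "\<forall>v\<in>vertices K. f v = g v \<Longrightarrow> \<sigma> \<in> K \<Longrightarrow> f ` \<sigma> = g ` \<sigma>"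
proof (rule image_cong[OF refl])
  fix x assume "\<forall>v\<in>vertices K. f v = g v" "\<sigma> \<in> K" "x \<in> \<sigma>"
  then show "f x = g x" using sub_vertices by blast
qed

lemma smap_agree:
  assumes "\<forall>v\<in>vertices K. f v = g v" "simplicial_map K K' f"
  shows "simplicial_map K K' g"
  unfolding simplicial_map_def
proof
  fix \<sigma> assume s: "\<sigma> \<in> K"
  have "f ` \<sigma> = g ` \<sigma>" by (rule image_agree[OF assms(1) s])
  then show "g ` \<sigma> \<in> K'" using assms(2) s unfolding simplicial_map_def by metis
qed

lemma contig_relax:
  assumes sm: "\<forall>i\<le>n. simplicial_map K K' (h i)"
    and ct: "\<forall>i<n. \<forall>\<sigma>\<in>K. h i ` \<sigma> \<union> h (Suc i) ` \<sigma> \<in> K'"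
    and a0: "\<forall>v\<in>vertices K. h 0 v = f v" and an: "\<forall>v\<in>vertices K. h n v = g v"
  shows "contig_equiv K K' f g"
proof -
  define h' where "h' i = (if i = 0 then f else if i \<le> Suc n then h (i - 1) else g)" for i
  have H0: "h' 0 = f" and HN: "h' (Suc (Suc n)) = g" by (simp_all add: h'_def)
  have HM: "h' (Suc j) = h j" if "j \<le> n" for j using that by (simp add: h'_def)
  have f0: "f ` \<sigma> = h 0 ` \<sigma>" if "\<sigma> \<in> K" for \<sigma> using a0 image_agree that by metis
  have gn: "g ` \<sigma> = h n ` \<sigma>" if "\<sigma> \<in> K" for \<sigma> using an image_agree that by metis
  have smf: "simplicial_map K K' f" using smap_agree[of K "h 0" f] a0 sm by simp
  have smg: "simplicial_map K K' g" using smap_agree[of K "h n" g] an sm by simp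
  have S: "simplicial_map K K' (h' i)" if i_le: "i \<le> Suc (Suc n)" for i
  proof -
    consider "i = 0" | j where "i = Suc j" "j \<le> n" | "i = Suc (Suc n)"
    proof -
      have "i = 0 \<or> (i - 1 \<le> n \<and> i = Suc (i - 1)) \<or> i = Suc (Suc n)" using i_le by arith
      then show ?thesis using that by blast
    qed
    then show ?thesis
    proof cases
      case 1 then show ?thesis using H0 smf by simp
    next
      case 2 then show ?thesis using HM sm by simp
    next
      case 3 then show ?thesis using HN smg by simp
    qed
  qed
  have C: "contiguous K K' (h' i) (h' (Suc i))" if "i < Suc (Suc n)" for i
  proof -
    have U: "h' i ` \<sigma> \<union> h' (Suc i) ` \<sigma> \<in> K'" if s: "\<sigma> \<in> K" for \<sigma>
    proof -
      consider "i = 0" | j where "i = Suc j" "j < n" | "i = Suc n"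
      proof -
        have "i = 0 \<or> (i - 1 < n \<and> i = Suc (i - 1)) \<or> i = Suc n" using \<open>i < Suc (Suc n)\<close> by arith
        then show ?thesis using that by blast
      qed
      then show ?thesis
      proof cases
        case 1
        have "h' i ` \<sigma> \<union> h' (Suc i) ` \<sigma> = h 0 ` \<sigma>" using 1 H0 HM[of 0] f0[OF s] by simp
        then show ?thesis using sm s unfolding simplicial_map_def by simp
      next
        case 2
        have "h' i ` \<sigma> \<union> h' (Suc i) ` \<sigma> = h j ` \<sigma> \<union> h (Suc j) ` \<sigma>"
          using 2 HM[of j] HM[of "Suc j"] by simp
        then show ?thesis using ct 2 s by simp
      next
        case 3
        have "h' i ` \<sigma> \<union> h' (Suc i) ` \<sigma> = h n ` \<sigma>" using 3 HN HM[of n] gn[OF s] by simp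
        then show ?thesis using sm s unfolding simplicial_map_def by simp
      qed
    qed
    show ?thesis unfolding contiguous_def using S that U by simp
  qed
  show ?thesis unfolding contig_equiv_def
    by (rule exI[of _ h'], rule exI[of _ "Suc (Suc n)"]) (use H0 HN S C in simp)
qed

lemma contig_equivD:
  assumes "contig_equiv K K' f g"
  obtains h n where "h 0 = f" "h n = g" "\<forall>i\<le>n. simplicial_map K K' (h i)"
    "\<forall>i<n. \<forall>\<sigma>\<in>K. h i ` \<sigma> \<union> h (Suc i) ` \<sigma> \<in> K'"
  using assms unfolding contig_equiv_def contiguous_def by blast

lemma contig_trans:
  assumes "contig_equiv K K' f g" "contig_equiv K K' g k"
  shows "contig_equiv K K' f k"
proof -
  obtain h1 n1 where 1: "h1 0 = f" "h1 n1 = g" "\<forall>i\<le>n1. simplicial_map K K' (h1 i)"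
    "\<forall>i<n1. \<forall>\<sigma>\<in>K. h1 i ` \<sigma> \<union> h1 (Suc i) ` \<sigma> \<in> K'" using assms(1) by (rule contig_equivD)
  obtain h2 n2 where 2: "h2 0 = g" "h2 n2 = k" "\<forall>i\<le>n2. simplicial_map K K' (h2 i)"
    "\<forall>i<n2. \<forall>\<sigma>\<in>K. h2 i ` \<sigma> \<union> h2 (Suc i) ` \<sigma> \<in> K'" using assms(2) by (rule contig_equivD)
  define h where "h i = (if i \<le> n1 then h1 i else h2 (i - n1))" for i
  have hA: "h i = h1 i" if "i \<le> n1" for i using that by (simp add: h_def)
  have hB: "h i = h2 (i - n1)" if "n1 \<le> i" for i
    using that 1(2) 2(1) by (cases "i = n1") (simp_all add: h_def)
  show ?thesis
  proof (rule contig_relax[of "n1 + n2" K K' h])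
    show "\<forall>i\<le>n1 + n2. simplicial_map K K' (h i)"
    proof (intro allI impI)
      fix i assume i: "i \<le> n1 + n2"
      show "simplicial_map K K' (h i)"
      proof (cases "i \<le> n1")
        case True then show ?thesis using hA 1(3) by simp
      next
        case False then show ?thesis using hB[of i] 2(3) i by simp
      qed
    qed
    show "\<forall>i<n1 + n2. \<forall>\<sigma>\<in>K. h i ` \<sigma> \<union> h (Suc i) ` \<sigma> \<in> K'"
    proof (intro allI impI)
      fix i assume i: "i < n1 + n2"
      show "\<forall>\<sigma>\<in>K. h i ` \<sigma> \<union> h (Suc i) ` \<sigma> \<in> K'"
      proof (cases "i < n1")
        case True then show ?thesis using hA[of i] hA[of "Suc i"] 1(4) by simp
      next
        case False
        then have "i - n1 < n2" "Suc i - n1 = Suc (i - n1)" using i by auto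
        then show ?thesis using False hB[of i] hB[of "Suc i"] 2(4) by simp
      qed
    qed
    show "\<forall>v\<in>vertices K. h 0 v = f v" using hA[of 0] 1(1) by simp
    show "\<forall>v\<in>vertices K. h (n1 + n2) v = k v" using hB[of "n1+n2"] 2(2) by simp
  qed
qed

lemma contig_sym:
  assumes "contig_equiv K K' f g"
  shows "contig_equiv K K' g f"
proof -
  obtain h n where 1: "h 0 = f" "h n = g" "\<forall>i\<le>n. simplicial_map K K' (h i)"
    "\<forall>i<n. \<forall>\<sigma>\<in>K. h i ` \<sigma> \<union> h (Suc i) ` \<sigma> \<in> K'" using assms by (rule contig_equivD)
  show ?thesis
  proof (rule contig_relax[of n K K' "\<lambda>i. h (n - i)"])
    show "\<forall>i\<le>n. simplicial_map K K' (h (n - i))" using 1(3) by simp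
    show "\<forall>i<n. \<forall>\<sigma>\<in>K. h (n - i) ` \<sigma> \<union> h (n - Suc i) ` \<sigma> \<in> K'"
    proof (intro allI impI ballI)
      fix i \<sigma> assume "i < n" "\<sigma> \<in> K"
      then have e: "n - i = Suc (n - Suc i)" "n - Suc i < n" by auto
      have "h (n - Suc i) ` \<sigma> \<union> h (Suc (n - Suc i)) ` \<sigma> \<in> K'" using 1(4) e(2) \<open>\<sigma> \<in> K\<close> by blast
      then show "h (n - i) ` \<sigma> \<union> h (n - Suc i) ` \<sigma> \<in> K'" using e(1) by (simp add: Un_commute)
    qed
    show "\<forall>v\<in>vertices K. h (n - 0) v = g v" using 1(2) by simp
    show "\<forall>v\<in>vertices K. h (n - n) v = f v" using 1(1) by simp
  qed
qed

lemma contig_comp: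
  assumes "contig_equiv K K' f g" "simplicial_map K' K'' \<psi>"
  shows "contig_equiv K K'' (\<psi> \<circ> f) (\<psi> \<circ> g)"
proof -
  obtain h n where 1: "h 0 = f" "h n = g" "\<forall>i\<le>n. simplicial_map K K' (h i)"
    "\<forall>i<n. \<forall>\<sigma>\<in>K. h i ` \<sigma> \<union> h (Suc i) ` \<sigma> \<in> K'" using assms(1) by (rule contig_equivD)
  have im: "(\<psi> \<circ> u) ` A = \<psi> ` (u ` A)" for u :: "'a \<Rightarrow> 'b" and A by (simp add: image_comp)
  show ?thesis
  proof (rule contig_relax[of n K K'' "\<lambda>i. \<psi> \<circ> h i"])
    show "\<forall>i\<le>n. simplicial_map K K'' (\<psi> \<circ> h i)"
    proof (intro allI impI)
      fix i assume "i \<le> n"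
      then show "simplicial_map K K'' (\<psi> \<circ> h i)"
        using 1(3) assms(2) unfolding simplicial_map_def im by blast
    qed
    show "\<forall>i<n. \<forall>\<sigma>\<in>K. (\<psi> \<circ> h i) ` \<sigma> \<union> (\<psi> \<circ> h (Suc i)) ` \<sigma> \<in> K''"
    proof (intro allI impI ballI)
      fix i \<sigma> assume "i < n" "\<sigma> \<in> K"
      then have "h i ` \<sigma> \<union> h (Suc i) ` \<sigma> \<in> K'" using 1(4) by blast
      then have "\<psi> ` (h i ` \<sigma> \<union> h (Suc i) ` \<sigma>) \<in> K''" using assms(2) unfolding simplicial_map_def by blast
      then show "(\<psi> \<circ> h i) ` \<sigma> \<union> (\<psi> \<circ> h (Suc i)) ` \<sigma> \<in> K''" by (simp add: image_Un image_image)
    qed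
    show "\<forall>v\<in>vertices K. (\<psi> \<circ> h 0) v = (\<psi> \<circ> f) v" using 1(1) by simp
    show "\<forall>v\<in>vertices K. (\<psi> \<circ> h n) v = (\<psi> \<circ> g) v" using 1(2) by simp
  qed
qed

lemma smap_const:
  assumes "simplicial_complex K" "{a} \<in> L"
  shows "simplicial_map K L (\<lambda>_. a)"
  unfolding simplicial_map_def
proof
  fix \<sigma> assume "\<sigma> \<in> K"
  then have "\<sigma> \<noteq> {}" using sc_ne assms(1) by blast
  then have "(\<lambda>_. a) ` \<sigma> = {a}" by blast
  then show "(\<lambda>_. a) ` \<sigma> \<in> L" using assms(2) by simp
qed

lemma contig_edge:
  fixes K :: "'a set set" and L :: "'b set set"
  assumes "simplicial_complex K" "simplicial_complex L" "{a, b} \<in> L"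
  shows "contig_equiv K L (\<lambda>_. a) (\<lambda>_. b)"
proof -
  have a: "{a} \<in> L" "{b} \<in> L" using sc_sub[OF assms(2,3)] by blast+
  define h where "h = (\<lambda>(i::nat) (_::'a). if i = 0 then a else b)"
  show ?thesis
  proof (rule contig_relax[of 1 K L h])
    show "\<forall>i\<le>1. simplicial_map K L (h i)"
      using smap_const[OF assms(1) a(1)] smap_const[OF assms(1) a(2)] by (simp add: h_def)
    show "\<forall>i<1. \<forall>\<sigma>\<in>K. h i ` \<sigma> \<union> h (Suc i) ` \<sigma> \<in> L"
    proof (intro allI impI ballI)
      fix i \<sigma> assume "i < (1::nat)" "\<sigma> \<in> K"
      then have "i = 0" "\<sigma> \<noteq> {}" using sc_ne assms(1) by auto
      then have "h i ` \<sigma> \<union> h (Suc i) ` \<sigma> = {a, b}" by (auto simp: h_def)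
      then show "h i ` \<sigma> \<union> h (Suc i) ` \<sigma> \<in> L" using assms(3) by simp
    qed
  qed (simp_all add: h_def)
qed

lemma contig_path:
  assumes "simplicial_complex K" "simplicial_complex L"
    and "(\<lambda>x y. {x, y} \<in> L)\<^sup>*\<^sup>* a b" "a \<in> vertices L"
  shows "contig_equiv K L (\<lambda>_. a) (\<lambda>_. b)"
  using assms(3)
proof (induction rule: rtranclp_induct)
  case base
  show ?case
    by (rule contig_relax[of 0 K L "\<lambda>_ _. a"])
      (use smap_const[OF assms(1) sc_singleton[OF assms(2,4)]] in simp_all)
next
  case (step y z)
  then show ?case using contig_trans contig_edge[OF assms(1,2)] by metis
qed


lemma SD_mono_gen:
  assumes "\<And>K0. subcomplex K0 K \<Longrightarrow> contig_equiv K0 K1 f g \<Longrightarrow> contig_equiv K0 K2 f' g'"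
  shows "SD K K2 f' g' \<le> SD K K1 f g"
  unfolding SD_def
proof (rule Inf_superset_mono)
  show "{enat k |k. \<exists>Ks. (\<forall>j\<le>k. subcomplex (Ks j) K \<and> contig_equiv (Ks j) K1 f g) \<and> K = (\<Union>j\<le>k. Ks j)}
     \<subseteq> {enat k |k. \<exists>Ks. (\<forall>j\<le>k. subcomplex (Ks j) K \<and> contig_equiv (Ks j) K2 f' g') \<and> K = (\<Union>j\<le>k. Ks j)}"
    using assms by blast
qed

lemma part1:
  assumes "simplicial_map L L' \<phi>"
  shows "scat_map L L' \<phi> \<le> scat L"
  unfolding scat_map_def scat_def
proof (rule SD_mono_gen)
  fix K0 assume "contig_equiv K0 L id (\<lambda>_. base_vertex L)"
  from contig_comp[OF this assms] show "contig_equiv K0 L' \<phi> (\<phi> \<circ> (\<lambda>_. base_vertex L))" by simp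
qed

lemma prod_vertices:
  assumes "p \<in> vertices (A \<times>\<^sub>S B)"
  shows "fst p \<in> vertices A" "snd p \<in> vertices B"
proof -
  obtain \<tau> where t: "\<tau> \<in> A \<times>\<^sub>S B" "p \<in> \<tau>" using assms unfolding vertices_iff by blast
  then have "fst ` \<tau> \<in> A" "snd ` \<tau> \<in> B" unfolding prod_complex_def by auto
  then show "fst p \<in> vertices A" "snd p \<in> vertices B" using t(2) unfolding vertices_iff by auto
qed

lemma smap_fst: "simplicial_map (A \<times>\<^sub>S B) A fst" and smap_snd: "simplicial_map (A \<times>\<^sub>S B) B snd"
  unfolding simplicial_map_def prod_complex_def by auto

lemma contig_empty: "contig_equiv {} K' f g"
  by (rule contig_relax[of 0 "{}" K' "\<lambda>_. f"]) (auto simp: simplicial_map_def vertices_def)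

lemma part4:
  assumes "finite_complex L"
  shows "TC L \<le> scat (L \<times>\<^sub>S L)"
  unfolding TC_def scat_def
proof (rule SD_mono_gen)
  fix K0 assume sub: "subcomplex K0 (L \<times>\<^sub>S L)"
    and ce: "contig_equiv K0 (L \<times>\<^sub>S L) id (\<lambda>_. base_vertex (L \<times>\<^sub>S L))"
  show "contig_equiv K0 L fst snd"
  proof (cases "K0 = {}")
    case True then show ?thesis using contig_empty by simp
  next
    case False
    have scL: "simplicial_complex L" and ec: "edge_connected L"
      using assms unfolding finite_complex_def complex_def by auto
    have sc0: "simplicial_complex K0" using sub unfolding subcomplex_def by simp
    obtain \<tau> where "\<tau> \<in> K0" using False by blast
    then have "\<tau> \<in> L \<times>\<^sub>S L" "\<tau> \<noteq> {}" using sub sc_ne[OF sc0] unfolding subcomplex_def by auto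
    then have "\<exists>v. v \<in> vertices (L \<times>\<^sub>S L)" unfolding vertices_iff by blast
    then have bv: "base_vertex (L \<times>\<^sub>S L) \<in> vertices (L \<times>\<^sub>S L)"
      unfolding base_vertex_def by (rule someI_ex)
    obtain v0 w0 where vw: "base_vertex (L \<times>\<^sub>S L) = (v0, w0)" by (cases "base_vertex (L \<times>\<^sub>S L)")
    have v0: "v0 \<in> vertices L" and w0: "w0 \<in> vertices L" using prod_vertices[OF bv] vw by auto
    have "contig_equiv K0 L (fst \<circ> id) (fst \<circ> (\<lambda>_. base_vertex (L \<times>\<^sub>S L)))"
      by (rule contig_comp[OF ce smap_fst])
    then have 1: "contig_equiv K0 L fst (\<lambda>_. v0)" using vw by (simp add: o_def)
    have "contig_equiv K0 L (snd \<circ> id) (snd \<circ> (\<lambda>_. base_vertex (L \<times>\<^sub>S L)))"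
      by (rule contig_comp[OF ce smap_snd])
    then have 2: "contig_equiv K0 L snd (\<lambda>_. w0)" using vw by (simp add: o_def)
    have "(\<lambda>x y. {x, y} \<in> L)\<^sup>*\<^sup>* v0 w0" using ec v0 w0 unfolding edge_connected_def by blast
    then have 3: "contig_equiv K0 L (\<lambda>_. v0) (\<lambda>_. w0)" using contig_path[OF sc0 scL _ v0] by blast
    show ?thesis using contig_trans[OF contig_trans[OF 1 3] contig_sym[OF 2]] .
  qed
qed


lemma sc_prod:
  assumes "simplicial_complex A" "simplicial_complex B"
  shows "simplicial_complex (A \<times>\<^sub>S B)"
  unfolding simplicial_complex_def
proof (intro ballI conjI allI impI)
  fix \<sigma> assume s: "\<sigma> \<in> A \<times>\<^sub>S B"
  then show "\<sigma> \<noteq> {}" "finite \<sigma>" unfolding prod_complex_def by auto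
  fix \<tau> assume t: "\<tau> \<subseteq> \<sigma> \<and> \<tau> \<noteq> {}"
  have "fst ` \<sigma> \<in> A" "snd ` \<sigma> \<in> B" "finite \<sigma>" using s unfolding prod_complex_def by auto
  moreover have "fst ` \<tau> \<subseteq> fst ` \<sigma>" "snd ` \<tau> \<subseteq> snd ` \<sigma>" "fst ` \<tau> \<noteq> {}" "snd ` \<tau> \<noteq> {}"
    using t by auto
  ultimately have "fst ` \<tau> \<in> A" "snd ` \<tau> \<in> B" "finite \<tau>"
    using sc_sub[OF assms(1)] sc_sub[OF assms(2)] t finite_subset by metis+
  then show "\<tau> \<in> A \<times>\<^sub>S B" using t unfolding prod_complex_def by simp
qed

lemma fib_inverse_simplicial:
  assumes fL: "finite_complex L" and fL': "finite_complex L'"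
    and bij: "bij_betw \<phi> (vertices L) (vertices L')"
    and fib: "finite_fibration L L' \<phi>"
    and s': "\<sigma>' \<in> L'"
  shows "inv_into (vertices L) \<phi> ` \<sigma>' \<in> L"
proof -
  define \<psi> where "\<psi> = inv_into (vertices L) \<phi>"
  have scL: "simplicial_complex L" using fL unfolding finite_complex_def complex_def by simp
  have scL': "simplicial_complex L'" using fL' unfolding finite_complex_def complex_def by simp
  have fin: "finite \<sigma>'" and ne: "\<sigma>' \<noteq> {}" using sc_fin[OF scL' s'] sc_ne[OF scL' s'] by auto
  define k where "k = card \<sigma>'"
  have k1: "k \<ge> 1" using fin ne unfolding k_def by (simp add: Suc_leI card_gt_0_iff)
  obtain e where e: "bij_betw e {0..<k} \<sigma>'" using ex_bij_betw_nat_finite[OF fin] unfolding k_def by blast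
  have eim: "e ` {0..<k} = \<sigma>'" using e by (simp add: bij_betw_def)
  obtain y0 where y0: "y0 \<in> \<sigma>'" using ne by blast
  have y0v: "y0 \<in> vertices L'" using y0 s' unfolding vertices_iff by blast
  define v where "v = \<psi> y0"
  have vv: "v \<in> vertices L" unfolding v_def \<psi>_def using bij y0v
    by (metis bij_betw_def inv_into_into)
  have pv: "\<phi> v = y0" unfolding v_def \<psi>_def using bij y0v
    by (metis bij_betw_def f_inv_into_f)
  define N :: "nat set set" where "N = {\<rho>. \<rho> \<noteq> {} \<and> \<rho> \<subseteq> {0..<k}}"
  have vN: "vertices N = {0..<k}"
  proof
    show "vertices N \<subseteq> {0..<k}" unfolding vertices_def N_def by blast
    show "{0..<k} \<subseteq> vertices N"
    proof
      fix x assume "x \<in> {0..<k}"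
      then have "{x} \<in> N" unfolding N_def by simp
      then show "x \<in> vertices N" unfolding vertices_iff by blast
    qed
  qed
  have scN: "simplicial_complex N" unfolding simplicial_complex_def N_def
    by (auto intro: finite_subset)
  have ecN: "edge_connected N" unfolding edge_connected_def vN
  proof (intro ballI)
    fix a b assume "a \<in> {0..<k}" "b \<in> {0..<k}"
    then have "{a, b} \<in> N" unfolding N_def by simp
    then show "(\<lambda>x y. {x, y} \<in> N)\<^sup>*\<^sup>* a b" by (rule r_into_rtranclp)
  qed
  have fN: "finite_complex N" unfolding finite_complex_def complex_def vN using scN ecN by simp
  define g :: "nat \<times> nat \<Rightarrow> 'a" where "g = (\<lambda>_. v)"
  define G :: "nat \<times> nat \<Rightarrow> 'b" where "G = (\<lambda>(n, t). if t = 0 then y0 else e n)"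
  have sg: "simplicial_map (N \<times>\<^sub>S {{0}}) L g" unfolding g_def
  proof (rule smap_const)
    show "simplicial_complex (N \<times>\<^sub>S {{0}})"
      by (rule sc_prod[OF scN]) (auto simp: simplicial_complex_def subset_singleton_iff)
    show "{v} \<in> L" using sc_singleton[OF scL vv] .
  qed
  define I where "I = interval_complex 1"
  have I0: "{0} \<in> I" and I1: "{1} \<in> I" unfolding I_def interval_complex_def by auto
  have sG: "simplicial_map (N \<times>\<^sub>S I) L' G" unfolding simplicial_map_def
  proof
    fix \<tau> assume t: "\<tau> \<in> N \<times>\<^sub>S I"
    then have ne: "\<tau> \<noteq> {}" and fs: "fst ` \<tau> \<in> N" unfolding prod_complex_def by auto
    have "G ` \<tau> \<subseteq> \<sigma>'"
    proof
      fix y assume "y \<in> G ` \<tau>"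
      then obtain n t where nt: "(n, t) \<in> \<tau>" "y = G (n, t)" by auto
      then have "n \<in> fst ` \<tau>" by force
      then have "n \<in> {0..<k}" using fs unfolding N_def by blast
      then show "y \<in> \<sigma>'" using nt y0 eim unfolding G_def by auto
    qed
    then show "G ` \<tau> \<in> L'" using sc_sub[OF scL' s'] ne by blast
  qed
  have agree: "\<forall>x\<in>vertices (N \<times>\<^sub>S {{0}}). \<phi> (g x) = G x"
  proof
    fix x :: "nat \<times> nat" assume "x \<in> vertices (N \<times>\<^sub>S {{0}})"
    then have "snd x \<in> vertices {{0::nat}}" by (rule prod_vertices)
    then have "snd x = 0" unfolding vertices_def by simp
    then show "\<phi> (g x) = G x" unfolding g_def G_def using pv by (cases x) simp
  qed
  obtain Gt where Gt: "simplicial_map (N \<times>\<^sub>S I) L Gt"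
    "\<forall>x\<in>vertices (N \<times>\<^sub>S I). \<phi> (Gt x) = G x"
    using fib fN k1 sg sG agree unfolding finite_fibration_def I_def
    by (metis (no_types, lifting) le_numeral_extra(4))
  define \<tau>1 where "\<tau>1 = {0..<k} \<times> {1::nat}"
  have t1: "\<tau>1 \<in> N \<times>\<^sub>S I" unfolding prod_complex_def \<tau>1_def N_def using k1 I1 by auto
  have "Gt ` \<tau>1 \<in> L" using Gt(1) t1 unfolding simplicial_map_def by blast
  moreover have "Gt ` \<tau>1 = \<psi> ` \<sigma>'"
  proof -
    have "Gt x = \<psi> (e (fst x))" if x: "x \<in> \<tau>1" for x
    proof -
      have xv: "x \<in> vertices (N \<times>\<^sub>S I)" using x t1 unfolding vertices_iff by blast
      have "{x} \<in> N \<times>\<^sub>S I" using x unfolding \<tau>1_def prod_complex_def N_def using I1 by auto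
      then have "Gt ` {x} \<in> L" using Gt(1) unfolding simplicial_map_def by blast
      then have gv: "Gt x \<in> vertices L" unfolding vertices_iff by auto
      have "\<phi> (Gt x) = e (fst x)" using Gt(2) xv x unfolding G_def \<tau>1_def by auto
      then show ?thesis unfolding \<psi>_def using gv bij
        by (metis bij_betw_def inv_into_f_f)
    qed
    then have "Gt ` \<tau>1 = (\<lambda>x. \<psi> (e (fst x))) ` \<tau>1" by (rule image_cong[OF refl])
    also have "\<dots> = \<psi> ` e ` {0..<k}" unfolding \<tau>1_def by force
    finally show ?thesis using eim by simp
  qed
  ultimately show ?thesis unfolding \<psi>_def by simp
qed


lemma path_end_eq:
  assumes "\<forall>i\<ge>m. \<delta> i = \<delta> m"
  shows "path_end \<delta> = \<delta> m"
proof -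
  define l where "l = (LEAST m. \<forall>i\<ge>m. \<delta> i = \<delta> m)"
  have "\<forall>i\<ge>l. \<delta> i = \<delta> l" unfolding l_def by (rule LeastI[of _ m]) (rule assms)
  moreover have "l \<le> m" unfolding l_def by (rule Least_le) (rule assms)
  ultimately have "\<delta> m = \<delta> l" by blast
  then show ?thesis unfolding path_end_def l_def by simp
qed

lemma path_end_ge:
  assumes "\<forall>i\<ge>m. \<delta> i = \<delta> m" "m \<le> M"
  shows "\<delta> M = path_end \<delta>"
proof -
  have "\<delta> M = \<delta> m" using assms by blast
  then show ?thesis using path_end_eq[OF assms(1)] by simp
qed

lemma schwarz_set_def':
  "schwarz_genus E B p = Inf {enat k | k. \<exists>Bs :: nat \<Rightarrow> _ set set.
       (\<forall>j\<le>k. subcomplex (Bs j) B \<and>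
          (\<exists>s. simplicial_map (Bs j) E s \<and> (\<forall>b\<in>vertices (Bs j). p (s b) = b))) \<and>
       B = (\<Union>j\<le>k. Bs j)}"
  by (simp add: schwarz_genus_def)

lemma section_chain:
  fixes A :: "'a set set" and B :: "('a \<times> 'b) set set"
  assumes scL: "simplicial_complex L" and finL: "finite (vertices L)"
    and inj: "inj_on \<phi> (vertices L)"
    and v0: "v0 \<in> vertices L"
    and AB: "\<forall>\<sigma>\<in>A. \<sigma> \<times> {\<phi> v0} \<in> B" and AL: "A \<subseteq> L" and scB: "simplicial_complex B"
    and sm: "simplicial_map B (path_complex L) s"
    and pi: "\<forall>b\<in>vertices B. pi_map \<phi> (s b) = b"
  shows "contig_equiv A L id (\<lambda>_. v0)"
proof -
  define h where "h i x = s (x, \<phi> v0) i" for i x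
  have vA: "(x, \<phi> v0) \<in> vertices B" if xA: "x \<in> vertices A" for x
  proof -
    obtain \<sigma> where "\<sigma> \<in> A" "x \<in> \<sigma>" using xA unfolding vertices_iff by blast
    then have "\<sigma> \<times> {\<phi> v0} \<in> B" "(x, \<phi> v0) \<in> \<sigma> \<times> {\<phi> v0}" using AB by auto
    then show ?thesis unfolding vertices_iff by (rule rev_bexI)
  qed
  have path: "is_path L (s (x, \<phi> v0))" if "x \<in> vertices A" for x
  proof -
    have "{(x, \<phi> v0)} \<in> B" using sc_singleton[OF scB vA[OF that]] .
    then have "s ` {(x, \<phi> v0)} \<in> path_complex L" using sm unfolding simplicial_map_def by (rule bspec[rotated])
    then show ?thesis unfolding path_complex_def by blast
  qed
  define st where "st x = (SOME m. \<forall>i\<ge>m. s (x, \<phi> v0) i = s (x, \<phi> v0) m)" for x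
  have st: "\<forall>i\<ge>st x. s (x, \<phi> v0) i = s (x, \<phi> v0) (st x)" if "x \<in> vertices A" for x
  proof -
    have "\<exists>m. \<forall>i\<ge>m. s (x, \<phi> v0) i = s (x, \<phi> v0) m" using path[OF that] unfolding is_path_def by blast
    then show ?thesis unfolding st_def by (rule someI_ex)
  qed
  have "vertices A \<subseteq> vertices L" using AL unfolding vertices_def by blast
  then have finA: "finite (vertices A)" using finL by (rule finite_subset)
  define M where "M = Max (insert 0 (st ` vertices A))"
  have stM: "st x \<le> M" if "x \<in> vertices A" for x
    unfolding M_def using finA that by (simp add: Max_ge_iff)
  show ?thesis
  proof (rule contig_relax[of M A L h])
    have U: "h i ` \<sigma> \<union> h (Suc i) ` \<sigma> \<in> L" if s\<sigma>: "\<sigma> \<in> A" for i \<sigma>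
    proof -
      have "\<sigma> \<times> {\<phi> v0} \<in> B" using AB s\<sigma> by blast
      then have "s ` (\<sigma> \<times> {\<phi> v0}) \<in> path_complex L" using sm unfolding simplicial_map_def by blast
      then have "(\<Union>\<delta>\<in>s ` (\<sigma> \<times> {\<phi> v0}). {\<delta> i, \<delta> (Suc i)}) \<in> L" unfolding path_complex_def by blast
      moreover have "(\<Union>\<delta>\<in>s ` (\<sigma> \<times> {\<phi> v0}). {\<delta> i, \<delta> (Suc i)}) = h i ` \<sigma> \<union> h (Suc i) ` \<sigma>"
        unfolding h_def by auto
      ultimately show ?thesis by simp
    qed
    have scA: "\<sigma> \<noteq> {}" if "\<sigma> \<in> A" for \<sigma> using AL that sc_ne[OF scL] by blast
    show "\<forall>i\<le>M. simplicial_map A L (h i)"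
    proof (intro allI impI)
      fix i
      show "simplicial_map A L (h i)" unfolding simplicial_map_def
      proof
        fix \<sigma> assume "\<sigma> \<in> A"
        then show "h i ` \<sigma> \<in> L" using U[of \<sigma> i] scA sc_sub[OF scL] by blast
      qed
    qed
    show "\<forall>i<M. \<forall>\<sigma>\<in>A. h i ` \<sigma> \<union> h (Suc i) ` \<sigma> \<in> L" using U by blast
    show "\<forall>v\<in>vertices A. h 0 v = id v"
    proof
      fix x assume "x \<in> vertices A"
      then have "pi_map \<phi> (s (x, \<phi> v0)) = (x, \<phi> v0)" using pi vA by blast
      then show "h 0 x = id x" unfolding h_def pi_map_def by simp
    qed
    show "\<forall>v\<in>vertices A. h M v = v0"
    proof
      fix x assume x: "x \<in> vertices A"
      then have "pi_map \<phi> (s (x, \<phi> v0)) = (x, \<phi> v0)" using pi vA by blast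
      then have 1: "\<phi> (path_end (s (x, \<phi> v0))) = \<phi> v0" unfolding pi_map_def by simp
      have 2: "h M x = path_end (s (x, \<phi> v0))" unfolding h_def
        using path_end_ge[OF st[OF x] stM[OF x]] .
      have "{h M x, h (Suc M) x} \<in> L"
        using path[OF x] unfolding h_def is_path_def by blast
      then have "h M x \<in> vertices L" unfolding vertices_iff by blast
      then have "path_end (s (x, \<phi> v0)) \<in> vertices L" using 2 by simp
      from inj_onD[OF inj 1 this v0] show "h M x = v0" using 2 by simp
    qed
  qed
qed


lemma chain_section:
  fixes T :: "'a \<times> 'b \<Rightarrow> 'a \<times> 'a"
  assumes scK: "simplicial_complex K"
    and h0: "h 0 = fst" and hn: "h n = snd"
    and hs: "\<forall>i\<le>n. simplicial_map K L (h i)"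
    and hc: "\<forall>i<n. \<forall>\<sigma>\<in>K. h i ` \<sigma> \<union> h (Suc i) ` \<sigma> \<in> L"
    and BK: "\<forall>\<tau>\<in>B. T ` \<tau> \<in> K" and Bne: "\<forall>\<tau>\<in>B. \<tau> \<noteq> {} \<and> finite \<tau>"
    and Tv: "\<forall>b\<in>vertices B. pi_map \<phi> (\<lambda>i. h (min i n) (T b)) = b"
  shows "\<exists>s. simplicial_map B (path_complex L) s \<and> (\<forall>b\<in>vertices B. pi_map \<phi> (s b) = b)"
proof -
  define s where "s b = (\<lambda>i. h (min i n) (T b))" for b
  have key: "h (min i n) ` \<rho> \<union> h (min (Suc i) n) ` \<rho> \<in> L" if r: "\<rho> \<in> K" for \<rho> i
  proof (cases "i < n")
    case True
    then have "min i n = i" "min (Suc i) n = Suc i" by auto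
    then show ?thesis using hc True r by simp
  next
    case False
    then have "min i n = n" "min (Suc i) n = n" by auto
    moreover have "h n ` \<rho> \<in> L" using hs r unfolding simplicial_map_def by blast
    ultimately show ?thesis by simp
  qed
  have "simplicial_map B (path_complex L) s" unfolding simplicial_map_def
  proof
    fix \<tau> assume t: "\<tau> \<in> B"
    define \<rho> where "\<rho> = T ` \<tau>"
    have r: "\<rho> \<in> K" using BK t unfolding \<rho>_def by blast
    have tne: "\<tau> \<noteq> {}" "finite \<tau>" using Bne t by auto
    have P: "is_path L \<delta>" if d: "\<delta> \<in> s ` \<tau>" for \<delta>
    proof -
      obtain b where b: "b \<in> \<tau>" "\<delta> = s b" using d by blast
      have "{T b} \<subseteq> \<rho>" using b unfolding \<rho>_def by blast
      then have Tb: "{T b} \<in> K" using sc_sub[OF scK r] by blast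
      have 1: "{\<delta> i, \<delta> (Suc i)} \<in> L" for i
      proof -
        have "h (min i n) ` {T b} \<union> h (min (Suc i) n) ` {T b} \<in> L" by (rule key[OF Tb])
        then show ?thesis using b(2) unfolding s_def by (simp add: insert_commute)
      qed
      have 2: "\<forall>i\<ge>n. \<delta> i = \<delta> n" using b(2) unfolding s_def by simp
      show ?thesis unfolding is_path_def using 1 2 by blast
    qed
    have U: "(\<Union>\<delta>\<in>s ` \<tau>. {\<delta> i, \<delta> (Suc i)}) \<in> L" for i
    proof -
      have "(\<Union>\<delta>\<in>s ` \<tau>. {\<delta> i, \<delta> (Suc i)}) = h (min i n) ` \<rho> \<union> h (min (Suc i) n) ` \<rho>"
        unfolding s_def \<rho>_def by blast
      then show ?thesis using key[OF r] by simp
    qed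
    show "s ` \<tau> \<in> path_complex L" unfolding path_complex_def using tne P U by blast
  qed
  moreover have "\<forall>b\<in>vertices B. pi_map \<phi> (s b) = b" using Tv unfolding s_def by blast
  ultimately show ?thesis by blast
qed


lemma SD_empty: "SD {} K' f g = 0"
proof -
  have "enat 0 \<in> {enat k | k. \<exists>Ks :: nat \<Rightarrow> 'a set set.
       (\<forall>j\<le>k. subcomplex (Ks j) ({} :: 'a set set) \<and> contig_equiv (Ks j) K' f g) \<and> {} = (\<Union>j\<le>k. Ks j)}"
    using contig_empty[of K' f g] by (auto simp: subcomplex_def simplicial_complex_def)
  then show ?thesis unfolding SD_def by (metis (no_types, lifting) Inf_lower le_zero_eq zero_enat_def)
qed

lemma part2:
  assumes fL: "finite_complex L" and fL': "finite_complex L'"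
    and sm: "simplicial_map L L' \<phi>" and bij: "bij_betw \<phi> (vertices L) (vertices L')"
  shows "scat L \<le> TC_map L L' \<phi>"
proof (cases "L = {}")
  case True
  then show ?thesis unfolding scat_def by (simp add: SD_empty)
next
  case False
  have scL: "simplicial_complex L" and finL: "finite (vertices L)"
    using fL unfolding finite_complex_def complex_def by auto
  define v0 where "v0 = base_vertex L"
  have "\<exists>v. v \<in> vertices L" using False sc_ne[OF scL] unfolding vertices_iff by blast
  then have v0: "v0 \<in> vertices L" unfolding v0_def base_vertex_def by (rule someI_ex)
  have inj: "inj_on \<phi> (vertices L)" using bij by (simp add: bij_betw_def)
  have "{v0} \<in> L" using sc_singleton[OF scL v0] .
  then have pv0: "{\<phi> v0} \<in> L'" using sm unfolding simplicial_map_def by (metis image_empty image_insert)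
  show ?thesis
    unfolding scat_def TC_map_def schwarz_genus_def SD_def
  proof (rule Inf_superset_mono, rule subsetI)
    fix e assume "e \<in> {enat k |k. \<exists>Bs. (\<forall>j\<le>k. subcomplex (Bs j) (L \<times>\<^sub>S L') \<and>
      (\<exists>s. simplicial_map (Bs j) (path_complex L) s \<and> (\<forall>b\<in>vertices (Bs j). pi_map \<phi> (s b) = b))) \<and>
      L \<times>\<^sub>S L' = (\<Union>j\<le>k. Bs j)}"
    then obtain k Bs where e: "e = enat k"
      and Bs: "\<forall>j\<le>k. subcomplex (Bs j) (L \<times>\<^sub>S L') \<and>
      (\<exists>s. simplicial_map (Bs j) (path_complex L) s \<and> (\<forall>b\<in>vertices (Bs j). pi_map \<phi> (s b) = b))"
      and cov: "L \<times>\<^sub>S L' = (\<Union>j\<le>k. Bs j)" by blast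
    define As where "As j = {\<sigma> \<in> L. \<sigma> \<times> {\<phi> v0} \<in> Bs j}" for j
    have "\<forall>j\<le>k. subcomplex (As j) L \<and> contig_equiv (As j) L id (\<lambda>_. base_vertex L)"
    proof (intro allI impI conjI)
      fix j assume j: "j \<le> k"
      then obtain s where s: "simplicial_map (Bs j) (path_complex L) s"
        "\<forall>b\<in>vertices (Bs j). pi_map \<phi> (s b) = b" using Bs by blast
      have scB: "simplicial_complex (Bs j)" using Bs j unfolding subcomplex_def by blast
      have sub: "subcomplex (As j) L" unfolding subcomplex_def simplicial_complex_def
      proof (intro conjI ballI allI impI)
        show "As j \<subseteq> L" unfolding As_def by blast
        fix \<sigma> assume sA: "\<sigma> \<in> As j"
        then show "\<sigma> \<noteq> {}" "finite \<sigma>" using sc_ne[OF scL] sc_fin[OF scL] unfolding As_def by auto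
        fix \<tau> assume t: "\<tau> \<subseteq> \<sigma> \<and> \<tau> \<noteq> {}"
        have "\<tau> \<in> L" using sc_sub[OF scL _ _] sA t unfolding As_def by blast
        moreover have "\<tau> \<times> {\<phi> v0} \<in> Bs j"
        proof (rule sc_sub[OF scB])
          show "\<sigma> \<times> {\<phi> v0} \<in> Bs j" using sA unfolding As_def by blast
          show "\<tau> \<times> {\<phi> v0} \<subseteq> \<sigma> \<times> {\<phi> v0}" using t by blast
          show "\<tau> \<times> {\<phi> v0} \<noteq> {}" using t by blast
        qed
        ultimately show "\<tau> \<in> As j" unfolding As_def by blast
      qed
      then show "subcomplex (As j) L" .
      have "contig_equiv (As j) L id (\<lambda>_. v0)"
      proof (rule section_chain[OF scL finL inj v0 _ _ scB s])
        show "\<forall>\<sigma>\<in>As j. \<sigma> \<times> {\<phi> v0} \<in> Bs j" unfolding As_def by blast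
        show "As j \<subseteq> L" unfolding As_def by blast
      qed
      then show "contig_equiv (As j) L id (\<lambda>_. base_vertex L)" unfolding v0_def .
    qed
    moreover have "L = (\<Union>j\<le>k. As j)"
    proof
      show "(\<Union>j\<le>k. As j) \<subseteq> L" unfolding As_def by blast
      show "L \<subseteq> (\<Union>j\<le>k. As j)"
      proof
        fix \<sigma> assume s: "\<sigma> \<in> L"
        have "\<sigma> \<times> {\<phi> v0} \<in> L \<times>\<^sub>S L'"
          unfolding prod_complex_def using s sc_ne[OF scL s] sc_fin[OF scL s] pv0 by auto
        then obtain j where "j \<le> k" "\<sigma> \<times> {\<phi> v0} \<in> Bs j" using cov by blast
        then show "\<sigma> \<in> (\<Union>j\<le>k. As j)" using s unfolding As_def by blast
      qed
    qed
    ultimately show "e \<in> {enat k |k. \<exists>Ks. (\<forall>j\<le>k. subcomplex (Ks j) L \<and> contig_equiv (Ks j) L id (\<lambda>_. base_vertex L)) \<and>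
      L = (\<Union>j\<le>k. Ks j)}" using e by blast
  qed
qed


lemma part3:
  fixes L :: "'a set set" and L' :: "'b set set" and \<phi> :: "'a \<Rightarrow> 'b"
  assumes fL: "finite_complex L" and fL': "finite_complex L'"
    and bij: "bij_betw \<phi> (vertices L) (vertices L')"
    and fib: "finite_fibration L L' \<phi>"
  shows "TC_map L L' \<phi> \<le> TC L"
proof -
  have scL: "simplicial_complex L" using fL unfolding finite_complex_def complex_def by simp
  have scL': "simplicial_complex L'" using fL' unfolding finite_complex_def complex_def by simp
  have scLL': "simplicial_complex (L \<times>\<^sub>S L')" by (rule sc_prod[OF scL scL'])
  define \<psi> where "\<psi> = inv_into (vertices L) \<phi>"
  define T :: "'a \<times> 'b \<Rightarrow> 'a \<times> 'a" where "T = map_prod id \<psi>"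
  have Tprod: "T ` \<tau> \<in> L \<times>\<^sub>S L" if t: "\<tau> \<in> L \<times>\<^sub>S L'" for \<tau>
  proof -
    have 1: "\<tau> \<noteq> {}" "finite \<tau>" "fst ` \<tau> \<in> L" "snd ` \<tau> \<in> L'" using t unfolding prod_complex_def by auto
    have 2: "fst ` T ` \<tau> = fst ` \<tau>" "snd ` T ` \<tau> = \<psi> ` snd ` \<tau>" unfolding T_def
      by (simp_all add: image_image)
    have "\<psi> ` snd ` \<tau> \<in> L" unfolding \<psi>_def by (rule fib_inverse_simplicial[OF fL fL' bij fib 1(4)])
    then show ?thesis using 1 2 unfolding prod_complex_def by simp
  qed
  show ?thesis
    unfolding TC_map_def TC_def schwarz_genus_def SD_def
  proof (rule Inf_superset_mono, rule subsetI)
    fix e assume "e \<in> {enat k |k. \<exists>Ks. (\<forall>j\<le>k. subcomplex (Ks j) (L \<times>\<^sub>S L) \<and> contig_equiv (Ks j) L fst snd) \<and>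
      L \<times>\<^sub>S L = (\<Union>j\<le>k. Ks j)}"
    then obtain k Ks where e: "e = enat k"
      and Ks: "\<forall>j\<le>k. subcomplex (Ks j) (L \<times>\<^sub>S L) \<and> contig_equiv (Ks j) L fst snd"
      and cov: "L \<times>\<^sub>S L = (\<Union>j\<le>k. Ks j)" by blast
    define Bs where "Bs j = {\<tau> \<in> L \<times>\<^sub>S L'. T ` \<tau> \<in> Ks j}" for j
    have "\<forall>j\<le>k. subcomplex (Bs j) (L \<times>\<^sub>S L') \<and>
      (\<exists>s. simplicial_map (Bs j) (path_complex L) s \<and> (\<forall>b\<in>vertices (Bs j). pi_map \<phi> (s b) = b))"
    proof (intro allI impI conjI)
      fix j assume j: "j \<le> k"
      have scK: "simplicial_complex (Ks j)" using Ks j unfolding subcomplex_def by blast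
      show "subcomplex (Bs j) (L \<times>\<^sub>S L')" unfolding subcomplex_def simplicial_complex_def
      proof (intro conjI ballI allI impI)
        show "Bs j \<subseteq> L \<times>\<^sub>S L'" unfolding Bs_def by blast
        fix \<sigma> assume sB: "\<sigma> \<in> Bs j"
        then have sP: "\<sigma> \<in> L \<times>\<^sub>S L'" and sK: "T ` \<sigma> \<in> Ks j" unfolding Bs_def by auto
        show "\<sigma> \<noteq> {}" "finite \<sigma>" using sc_ne[OF scLL' sP] sc_fin[OF scLL' sP] by auto
        fix \<tau> assume t: "\<tau> \<subseteq> \<sigma> \<and> \<tau> \<noteq> {}"
        have "\<tau> \<in> L \<times>\<^sub>S L'" using sc_sub[OF scLL' sP] t by blast
        moreover have "T ` \<tau> \<in> Ks j"
        proof (rule sc_sub[OF scK sK])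
          show "T ` \<tau> \<subseteq> T ` \<sigma>" using t by blast
          show "T ` \<tau> \<noteq> {}" using t by blast
        qed
        ultimately show "\<tau> \<in> Bs j" unfolding Bs_def by blast
      qed
      have ceK: "contig_equiv (Ks j) L fst snd" using Ks j by blast
      obtain h n where hh: "h 0 = fst" "h n = snd" "\<forall>i\<le>n. simplicial_map (Ks j) L (h i)"
        "\<forall>i<n. \<forall>\<sigma>\<in>Ks j. h i ` \<sigma> \<union> h (Suc i) ` \<sigma> \<in> L"
        using ceK by (rule contig_equivD)
      show "\<exists>s. simplicial_map (Bs j) (path_complex L) s \<and> (\<forall>b\<in>vertices (Bs j). pi_map \<phi> (s b) = b)"
      proof (rule chain_section[OF scK hh])
        show "\<forall>\<tau>\<in>Bs j. T ` \<tau> \<in> Ks j" unfolding Bs_def by blast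
        show "\<forall>\<tau>\<in>Bs j. \<tau> \<noteq> {} \<and> finite \<tau>" unfolding Bs_def prod_complex_def by blast
        show "\<forall>b\<in>vertices (Bs j). pi_map \<phi> (\<lambda>i. h (min i n) (T b)) = b"
        proof
          fix b assume b: "b \<in> vertices (Bs j)"
          have "vertices (Bs j) \<subseteq> vertices (L \<times>\<^sub>S L')" unfolding vertices_def Bs_def by blast
          then have "snd b \<in> vertices L'" using b prod_vertices by blast
          then have ps: "\<phi> (\<psi> (snd b)) = snd b" unfolding \<psi>_def using bij
            by (metis bij_betw_def f_inv_into_f)
          define \<delta> where "\<delta> = (\<lambda>i. h (min i n) (T b))"
          have "\<forall>i\<ge>n. \<delta> i = \<delta> n" unfolding \<delta>_def by simp
          then have pe: "path_end \<delta> = \<delta> n" by (rule path_end_eq)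
          have "\<delta> n = \<psi> (snd b)" unfolding \<delta>_def T_def using hh(2) by (cases b) simp
          moreover have "\<delta> 0 = fst b" unfolding \<delta>_def T_def using hh(1) by (cases b) simp
          ultimately have "pi_map \<phi> \<delta> = b" unfolding pi_map_def using pe ps by simp
          then show "pi_map \<phi> (\<lambda>i. h (min i n) (T b)) = b" unfolding \<delta>_def .
        qed
      qed
    qed
    moreover have "L \<times>\<^sub>S L' = (\<Union>j\<le>k. Bs j)"
    proof
      show "(\<Union>j\<le>k. Bs j) \<subseteq> L \<times>\<^sub>S L'" unfolding Bs_def by blast
      show "L \<times>\<^sub>S L' \<subseteq> (\<Union>j\<le>k. Bs j)"
      proof
        fix \<tau> assume t: "\<tau> \<in> L \<times>\<^sub>S L'"
        then have "T ` \<tau> \<in> L \<times>\<^sub>S L" by (rule Tprod)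
        then obtain j where "j \<le> k" "T ` \<tau> \<in> Ks j" using cov by blast
        then show "\<tau> \<in> (\<Union>j\<le>k. Bs j)" using t unfolding Bs_def by blast
      qed
    qed
    ultimately show "e \<in> {enat k |k. \<exists>Bs. (\<forall>j\<le>k. subcomplex (Bs j) (L \<times>\<^sub>S L') \<and>
      (\<exists>s. simplicial_map (Bs j) (path_complex L) s \<and> (\<forall>b\<in>vertices (Bs j). pi_map \<phi> (s b) = b))) \<and>
      L \<times>\<^sub>S L' = (\<Union>j\<le>k. Bs j)}" using e by blast
  qed
qed

theorem corollary6p5:
  fixes L :: "'a set set" and L' :: "'b set set" and \<phi> :: "'a \<Rightarrow> 'b"
  assumes "finite_complex L" and "finite_complex L'"
    and "simplicial_map L L' \<phi>"
    and "bij_betw \<phi> (vertices L) (vertices L')"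
    and "finite_fibration L L' \<phi>"
  shows "scat_map L L' \<phi> \<le> scat L \<and> scat L \<le> TC_map L L' \<phi> \<and>
         TC_map L L' \<phi> \<le> TC L \<and> TC L \<le> scat (L \<times>\<^sub>S L)"
  using part1[OF assms(3)] part2[OF assms(1-4)] part3[OF assms(1,2,4,5)] part4[OF assms(1)]
  by blast

end
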